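(* Let $\ell,k$ be integers with $k>2$ and $\ell>6$, and let $t>0$ be real with $T=\lfloor tk\rfloor$. Let $B_{\ell,k}$ be the graph constructed as follows: for each $1\le r\le k$ take disjoint paths $x_{0,r}x_{1,r}\cdots x_{\ell+1,r}$ and $y_{0,r}y_{1,r}y_{2,r}y_{3,r}y_{4,r}y_{5,r}$; identify all $x_{0,r},y_{0,r}$ ($1\le r\le k$) into a single vertex $u$; identify all $x_{\ell+1,r},y_{5,r}$ into a single vertex $v$; identify $y_{2,1},\dots,y_{2,k}$ into a single vertex $y_{2,*}$ and $y_{3,1},\dots,y_{3,k}$ into a single vertex $y_{3,*}$ (so the $k$ edges $y_{2,r}y_{3,r}$ become the single edge $y_{2,*}y_{3,*}$). Let $H_{\ell,k,t}$ be obtained from $B_{\ell,k}$ by adding $T$ pendant vertices $u_1,\dots,u_T$ adjacent to $u$ and $T$ pendant vertices $v_1,\dots,v_T$ adjacent to $v$. Then the orbits on the vertex set of $H_{\ell,k,t}$ of the group of graph automorphisms fixing $u$ are $\{u_r\}_{r}$, $\{u\}$, $\{x_{1,r}\}_r,\dots,\{x_{\ell,r}\}_r$, $\{y_{1,r}\}_r$, $\{y_{2,*}\}$, $\{y_{3,*}\}$, $\{y_{4,r}\}_r$, $\{v\}$, $\{v_r\}_r$.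
   Context: A graph automorphism is a bijection of the vertex set preserving adjacency and non-adjacency. *)

theory Defs
  imports Complex_Main
begin

text \<open>Vertices of H_{l,k,t} after the identifications:
  U = u = x_{0,r} = y_{0,r};  V = v = x_{l+1,r} = y_{5,r};
  X i r = x_{i,r} (1 <= i <= l, 1 <= r <= k);  Y1 r = y_{1,r};  Y2 = y_{2,*};
  Y3 = y_{3,*};  Y4 r = y_{4,r};  PU r = u_r, PV r = v_r (1 <= r <= T).\<close>
datatype hvert = U | V | X nat nat | Y1 nat | Y2 | Y3 | Y4 nat | PU nat | PV nat

definition H_verts :: "nat \<Rightarrow> nat \<Rightarrow> nat \<Rightarrow> hvert set" where
  "H_verts l k T = {U, V, Y2, Y3}
     \<union> {X i r | i r. 1 \<le> i \<and> i \<le> l \<and> 1 \<le> r \<and> r \<le> k}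
     \<union> {Y1 r | r. 1 \<le> r \<and> r \<le> k} \<union> {Y4 r | r. 1 \<le> r \<and> r \<le> k}
     \<union> {PU r | r. 1 \<le> r \<and> r \<le> T} \<union> {PV r | r. 1 \<le> r \<and> r \<le> T}"

definition H_edges :: "nat \<Rightarrow> nat \<Rightarrow> nat \<Rightarrow> (hvert \<times> hvert) set" where
  "H_edges l k T =
        {(U, X 1 r) | r. 1 \<le> r \<and> r \<le> k}
      \<union> {(X i r, X (i+1) r) | i r. 1 \<le> i \<and> i < l \<and> 1 \<le> r \<and> r \<le> k}
      \<union> {(X l r, V) | r. 1 \<le> r \<and> r \<le> k}
      \<union> {(U, Y1 r) | r. 1 \<le> r \<and> r \<le> k}
      \<union> {(Y1 r, Y2) | r. 1 \<le> r \<and> r \<le> k}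
      \<union> {(Y2, Y3)}
      \<union> {(Y3, Y4 r) | r. 1 \<le> r \<and> r \<le> k}
      \<union> {(Y4 r, V) | r. 1 \<le> r \<and> r \<le> k}
      \<union> {(U, PU r) | r. 1 \<le> r \<and> r \<le> T}
      \<union> {(V, PV r) | r. 1 \<le> r \<and> r \<le> T}"

definition H_adj :: "nat \<Rightarrow> nat \<Rightarrow> nat \<Rightarrow> hvert \<Rightarrow> hvert \<Rightarrow> bool" where
  "H_adj l k T a b \<longleftrightarrow> (a, b) \<in> H_edges l k T \<or> (b, a) \<in> H_edges l k T"

definition graph_aut :: "'a set \<Rightarrow> ('a \<Rightarrow> 'a \<Rightarrow> bool) \<Rightarrow> ('a \<Rightarrow> 'a) \<Rightarrow> bool" where
  "graph_aut Vs E f \<longleftrightarrow> bij_betw f Vs Vs \<and>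
     (\<forall>a\<in>Vs. \<forall>b\<in>Vs. E a b \<longleftrightarrow> E (f a) (f b))"

definition stab_orbit :: "'a set \<Rightarrow> ('a \<Rightarrow> 'a \<Rightarrow> bool) \<Rightarrow> 'a \<Rightarrow> 'a \<Rightarrow> 'a set" where
  "stab_orbit Vs E x0 w = {f w | f. graph_aut Vs E f \<and> f x0 = x0}"

end

theory Submission imports Defs begin

lemma Hv_simps[simp]:
  "U \<in> H_verts l k T" "V \<in> H_verts l k T" "Y2 \<in> H_verts l k T" "Y3 \<in> H_verts l k T"
  "X i r \<in> H_verts l k T \<longleftrightarrow> 1 \<le> i \<and> i \<le> l \<and> 1 \<le> r \<and> r \<le> k"
  "Y1 r \<in> H_verts l k T \<longleftrightarrow> 1 \<le> r \<and> r \<le> k"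
  "Y4 r \<in> H_verts l k T \<longleftrightarrow> 1 \<le> r \<and> r \<le> k"
  "PU r \<in> H_verts l k T \<longleftrightarrow> 1 \<le> r \<and> r \<le> T"
  "PV r \<in> H_verts l k T \<longleftrightarrow> 1 \<le> r \<and> r \<le> T"
  by (auto simp: H_verts_def)

lemma nbrs_U: "H_adj l k T U w \<longleftrightarrow> (\<exists>r. 1 \<le> r \<and> r \<le> k \<and> (w = X 1 r \<or> w = Y1 r)) \<or> (\<exists>r. 1 \<le> r \<and> r \<le> T \<and> w = PU r)"
  by (cases w) (auto simp: H_adj_def H_edges_def)

lemma nbrs_V: "l \<ge> 1 \<Longrightarrow> H_adj l k T V w \<longleftrightarrow> (\<exists>r. 1 \<le> r \<and> r \<le> k \<and> (w = X l r \<or> w = Y4 r)) \<or> (\<exists>r. 1 \<le> r \<and> r \<le> T \<and> w = PV r)"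
  by (cases w) (auto simp: H_adj_def H_edges_def)

lemma nbrs_Y2: "H_adj l k T Y2 w \<longleftrightarrow> (\<exists>r. 1 \<le> r \<and> r \<le> k \<and> w = Y1 r) \<or> w = Y3"
  by (cases w) (auto simp: H_adj_def H_edges_def)

lemma nbrs_Y3: "H_adj l k T Y3 w \<longleftrightarrow> (\<exists>r. 1 \<le> r \<and> r \<le> k \<and> w = Y4 r) \<or> w = Y2"
  by (cases w) (auto simp: H_adj_def H_edges_def)

lemma nbrs_Y1: "1 \<le> s \<Longrightarrow> s \<le> k \<Longrightarrow> H_adj l k T (Y1 s) w \<longleftrightarrow> w = U \<or> w = Y2"
  by (cases w) (auto simp: H_adj_def H_edges_def)

lemma nbrs_Y4: "1 \<le> s \<Longrightarrow> s \<le> k \<Longrightarrow> H_adj l k T (Y4 s) w \<longleftrightarrow> w = V \<or> w = Y3"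
  by (cases w) (auto simp: H_adj_def H_edges_def)

lemma nbrs_PU: "1 \<le> s \<Longrightarrow> s \<le> T \<Longrightarrow> H_adj l k T (PU s) w \<longleftrightarrow> w = U"
  by (cases w) (auto simp: H_adj_def H_edges_def)

lemma nbrs_PV: "1 \<le> s \<Longrightarrow> s \<le> T \<Longrightarrow> H_adj l k T (PV s) w \<longleftrightarrow> w = V"
  by (cases w) (auto simp: H_adj_def H_edges_def)

lemma nbrs_X: "1 \<le> i \<Longrightarrow> i \<le> l \<Longrightarrow> 1 \<le> s \<Longrightarrow> s \<le> k \<Longrightarrow> H_adj l k T (X i s) w \<longleftrightarrow>
   (i < l \<and> w = X (i+1) s) \<or> (1 < i \<and> w = X (i-1) s) \<or> (i = 1 \<and> w = U) \<or> (i = l \<and> w = V)"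
  by (cases w) (auto simp: H_adj_def H_edges_def)

lemma adj_sym: "H_adj l k T a b = H_adj l k T b a"
  by (auto simp: H_adj_def)


definition P3 :: "'a set \<Rightarrow> ('a \<Rightarrow> 'a \<Rightarrow> bool) \<Rightarrow> 'a \<Rightarrow> bool" where
  "P3 Vs E a \<longleftrightarrow> (\<exists>b1 b2 b3. b1 \<in> Vs \<and> b2 \<in> Vs \<and> b3 \<in> Vs \<and> b1 \<noteq> b2 \<and> b1 \<noteq> b3 \<and> b2 \<noteq> b3
      \<and> E a b1 \<and> E a b2 \<and> E a b3)"

lemma notP3: "(\<And>b. E a b \<Longrightarrow> b = p \<or> b = q) \<Longrightarrow> \<not> P3 Vs E a"
  unfolding P3_def by metis

locale autU =
  fixes l k T :: nat and f :: "hvert \<Rightarrow> hvert"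
  assumes k2: "k > 2" and l6: "l > 6"
    and aut: "graph_aut (H_verts l k T) (H_adj l k T) f" and fU: "f U = U"
begin

abbreviation "Vs \<equiv> H_verts l k T"
abbreviation "E \<equiv> H_adj l k T"

lemma inV: "a \<in> Vs \<Longrightarrow> f a \<in> Vs"
  using aut unfolding graph_aut_def bij_betw_def by blast

lemma injV: "a \<in> Vs \<Longrightarrow> b \<in> Vs \<Longrightarrow> f a = f b \<Longrightarrow> a = b"
  using aut unfolding graph_aut_def bij_betw_def inj_on_def by blast

lemma surjV: "b \<in> Vs \<Longrightarrow> \<exists>a\<in>Vs. f a = b"
  using aut unfolding graph_aut_def bij_betw_def by (metis imageE)

lemma adjf: "a \<in> Vs \<Longrightarrow> b \<in> Vs \<Longrightarrow> E (f a) (f b) \<longleftrightarrow> E a b"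
  using aut unfolding graph_aut_def by blast

lemma P3f: assumes "a \<in> Vs" shows "P3 Vs E (f a) \<longleftrightarrow> P3 Vs E a"
proof
  assume "P3 Vs E (f a)"
  then obtain c1 c2 c3 where c: "c1 \<in> Vs" "c2 \<in> Vs" "c3 \<in> Vs" "c1 \<noteq> c2" "c1 \<noteq> c3" "c2 \<noteq> c3"
    "E (f a) c1" "E (f a) c2" "E (f a) c3" unfolding P3_def by blast
  obtain b1 b2 b3 where b: "b1 \<in> Vs" "b2 \<in> Vs" "b3 \<in> Vs" "f b1 = c1" "f b2 = c2" "f b3 = c3"
    using surjV c by metis
  show "P3 Vs E a" unfolding P3_def
    by (rule exI[of _ b1], rule exI[of _ b2], rule exI[of _ b3]) (use b c adjf assms in auto)
next
  assume "P3 Vs E a"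
  then obtain c1 c2 c3 where c: "c1 \<in> Vs" "c2 \<in> Vs" "c3 \<in> Vs" "c1 \<noteq> c2" "c1 \<noteq> c3" "c2 \<noteq> c3"
    "E a c1" "E a c2" "E a c3" unfolding P3_def by blast
  show "P3 Vs E (f a)" unfolding P3_def
    by (rule exI[of _ "f c1"], rule exI[of _ "f c2"], rule exI[of _ "f c3"])
      (use c adjf assms inV injV in metis)
qed

lemma P3_Y2: "P3 Vs E Y2"
  unfolding P3_def
  by (rule exI[of _ "Y1 1"], rule exI[of _ "Y1 2"], rule exI[of _ "Y3"]) (use k2 in \<open>auto simp: nbrs_Y2\<close>)

lemma P3_Y3: "P3 Vs E Y3"
  unfolding P3_def
  by (rule exI[of _ "Y4 1"], rule exI[of _ "Y4 2"], rule exI[of _ "Y2"]) (use k2 in \<open>auto simp: nbrs_Y3\<close>)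

lemma fY1: assumes "1 \<le> r" "r \<le> k" shows "\<exists>s. 1 \<le> s \<and> s \<le> k \<and> f (Y1 r) = Y1 s"
proof -
  have "E U (f (Y1 r))" using adjf[of U "Y1 r"] fU assms by (auto simp: nbrs_U)
  moreover have e2: "E (f (Y1 r)) (f Y2)" using adjf[of "Y1 r" Y2] assms by (auto simp: nbrs_Y1)
  moreover have ne: "f Y2 \<noteq> U" using injV[of Y2 U] fU by auto
  moreover have p3: "P3 Vs E (f Y2)" using P3f P3_Y2 by auto
  moreover have fin: "f Y2 \<in> Vs" by (rule inV) simp
  ultimately consider s where "1 \<le> s" "s \<le> k" "f (Y1 r) = X 1 s" | s where "1 \<le> s" "s \<le> k" "f (Y1 r) = Y1 s"
    | s where "1 \<le> s" "s \<le> T" "f (Y1 r) = PU s" by (auto simp: nbrs_U)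
  then show ?thesis
  proof cases
    case 1
    then have "f Y2 = X 2 s" using e2 ne l6 by (auto simp: nbrs_X)
    moreover have "\<not> P3 Vs E (X 2 s)" using l6 1 by (intro notP3[of _ _ "X 1 s" "X 3 s"]) (auto simp: nbrs_X)
    ultimately show ?thesis using p3 by simp
  next
    case 3 then show ?thesis using e2 ne by (auto simp: nbrs_PU)
  qed auto
qed

lemma fY2: "f Y2 = Y2"
proof -
  obtain s where s: "1 \<le> s" "s \<le> k" "f (Y1 1) = Y1 s" using fY1[of 1] k2 by auto
  have "E (f (Y1 1)) (f Y2)" using adjf[of "Y1 1" Y2] k2 by (auto simp: nbrs_Y1)
  moreover have ne: "f Y2 \<noteq> U" using injV[of Y2 U] fU by auto
  ultimately show ?thesis using s by (auto simp: nbrs_Y1)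
qed

lemma fY3: "f Y3 = Y3"
proof -
  have "E Y2 (f Y3)" using adjf[of Y2 Y3] fY2 by (auto simp: nbrs_Y2)
  moreover have p3: "P3 Vs E (f Y3)" using P3f P3_Y3 by auto
  moreover have "\<And>s. 1 \<le> s \<Longrightarrow> s \<le> k \<Longrightarrow> \<not> P3 Vs E (Y1 s)"
    by (rule notP3[of _ _ U Y2]) (auto simp: nbrs_Y1)
  ultimately show ?thesis by (auto simp: nbrs_Y2)
qed

lemma fY4: assumes "1 \<le> r" "r \<le> k" shows "\<exists>s. 1 \<le> s \<and> s \<le> k \<and> f (Y4 r) = Y4 s"
proof -
  have "E Y3 (f (Y4 r))" using adjf[of Y3 "Y4 r"] fY3 assms by (auto simp: nbrs_Y3)
  moreover have "f (Y4 r) \<noteq> Y2" using injV[of "Y4 r" Y2] fY2 assms by auto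
  ultimately show ?thesis by (auto simp: nbrs_Y3)
qed

lemma fX1: assumes "1 \<le> r" "r \<le> k" shows "\<exists>s. 1 \<le> s \<and> s \<le> k \<and> f (X 1 r) = X 1 s"
proof -
  have "E U (f (X 1 r))" using adjf[of U "X 1 r"] fU assms l6 by (auto simp: nbrs_U)
  moreover have "\<not> E (f (X 1 r)) Y2" using adjf[of "X 1 r" Y2] fY2 assms l6 by (auto simp: nbrs_X)
  moreover have e: "E (f (X 1 r)) (f (X 2 r))" using adjf[of "X 1 r" "X 2 r"] assms l6 by (auto simp: nbrs_X)
  moreover have "f (X 2 r) \<noteq> U" using injV[of "X 2 r" U] fU assms l6 by auto
  ultimately show ?thesis by (auto simp: nbrs_U nbrs_Y1 nbrs_PU)
qed

lemma fX: "1 \<le> i \<Longrightarrow> i \<le> l \<Longrightarrow> 1 \<le> r \<Longrightarrow> r \<le> k \<Longrightarrow> \<exists>s. 1 \<le> s \<and> s \<le> k \<and> f (X i r) = X i s"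
proof (induction i arbitrary: r rule: less_induct)
  case (less j)
  show ?case
  proof (cases "j = 1")
    case True then show ?thesis using fX1 less by auto
  next
    case False
    define i where "i = j - 1"
    have j: "j = i + 1" "1 \<le> i" "i < l" using False less i_def by auto
    obtain s where s: "1 \<le> s" "s \<le> k" "f (X i r) = X i s" using less j by auto
    have e: "E (X i s) (f (X j r))" using adjf[of "X i r" "X j r"] s less j by (auto simp: nbrs_X)
    have fin: "f (X j r) \<in> Vs" using inV less by simp
    consider "f (X j r) = X j s" | "1 < i" "f (X j r) = X (i-1) s" | "i = 1" "f (X j r) = U"
      using e j s by (auto simp: nbrs_X)
    then show ?thesis
    proof cases
      case 1 then show ?thesis using s by auto
    next
      case 2
      have "\<exists>s'. 1 \<le> s' \<and> s' \<le> k \<and> f (X (i-1) r) = X (i-1) s'"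
        by (rule less.IH) (use 2 j less in auto)
      then obtain s' where s': "1 \<le> s'" "s' \<le> k" "f (X (i-1) r) = X (i-1) s'" by auto
      have m1: "X (i-1) r \<in> Vs" "X i r \<in> Vs" using 2 j less by auto
      have "E (X i r) (X (i-1) r)" using 2 j less by (auto simp: nbrs_X)
      then have "E (X i s) (X (i-1) s')" using adjf[OF m1(2) m1(1)] s s' by simp
      then have "s' = s" using nbrs_X[of i l s k T "X (i-1) s'"] s s' 2 j by auto
      then have "f (X (i-1) r) = f (X j r)" using s' 2 by simp
      then have "X (i-1) r = X j r" using injV[OF m1(1), of "X j r"] less(2-5) by auto
      then show ?thesis using j by simp
    next
      case 3
      then show ?thesis using injV[of "X j r" U] fU less by auto
    qed
  qed
qed

lemma fV: "f V = V"
proof -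
  obtain s where s: "1 \<le> s" "s \<le> k" "f (X l 1) = X l s" using fX[of l 1] l6 k2 by auto
  have ll: "1 \<le> l - 1" "l - 1 \<le> l" "1 \<le> (1::nat)" "1 \<le> k" using l6 k2 by auto
  from fX[OF ll] obtain s' where s': "1 \<le> s'" "s' \<le> k" "f (X (l-1) 1) = X (l-1) s'" by auto
  have e: "E (X l s) (f V)" using adjf[of "X l 1" V] s l6 k2 by (auto simp: nbrs_X)
  have "E (X l s) (X (l-1) s')" using adjf[of "X l 1" "X (l-1) 1"] s s' l6 k2 by (auto simp: nbrs_X)
  then have "s' = s" using nbrs_X[of l l s k T "X (l-1) s'"] s s' l6 by auto
  moreover have "X (l-1) 1 \<in> Vs" using ll by simp
  moreover have "f V \<noteq> f (X (l-1) 1)" using injV[of V "X (l-1) 1"] \<open>X (l-1) 1 \<in> Vs\<close> by auto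
  ultimately show ?thesis using e s s' l6 by (auto simp: nbrs_X)
qed

lemma fPU: assumes "1 \<le> r" "r \<le> T" shows "\<exists>s. 1 \<le> s \<and> s \<le> T \<and> f (PU r) = PU s"
proof -
  have "E U (f (PU r))" using adjf[of U "PU r"] fU assms by (auto simp: nbrs_U)
  moreover have "\<not> E (f (PU r)) Y2" using adjf[of "PU r" Y2] fY2 assms by (auto simp: nbrs_PU)
  moreover have "\<And>s. 1 \<le> s \<Longrightarrow> s \<le> k \<Longrightarrow> f (PU r) \<noteq> X 1 s"
  proof
    fix s assume s: "1 \<le> s" "s \<le> k" "f (PU r) = X 1 s"
    obtain b where b: "b \<in> Vs" "f b = X 2 s" using surjV[of "X 2 s"] s l6 by auto
    have "E (f (PU r)) (f b)" using s b l6 by (auto simp: nbrs_X)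
    then have "E (PU r) b" using adjf[of "PU r" b] b assms by simp
    then have "b = U" using assms by (simp add: nbrs_PU)
    then show False using b fU by simp
  qed
  ultimately show ?thesis by (auto simp: nbrs_U nbrs_Y1)
qed

lemma fPV: assumes "1 \<le> r" "r \<le> T" shows "\<exists>s. 1 \<le> s \<and> s \<le> T \<and> f (PV r) = PV s"
proof -
  have "E V (f (PV r))" using adjf[of V "PV r"] fV assms l6 by (auto simp: nbrs_V)
  moreover have "\<not> E (f (PV r)) Y3" using adjf[of "PV r" Y3] fY3 assms by (auto simp: nbrs_PV)
  moreover have "\<And>s. 1 \<le> s \<Longrightarrow> s \<le> k \<Longrightarrow> f (PV r) \<noteq> X l s"
  proof
    fix s assume s: "1 \<le> s" "s \<le> k" "f (PV r) = X l s"
    have "X (l-1) s \<in> Vs" using s l6 by simp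
    then obtain b where b: "b \<in> Vs" "f b = X (l-1) s" using surjV by blast
    have "E (f (PV r)) (f b)" using s b l6 by (auto simp: nbrs_X)
    then have "E (PV r) b" using adjf[of "PV r" b] b assms by simp
    then have "b = V" using assms by (simp add: nbrs_PV)
    then show False using b fV l6 by simp
  qed
  ultimately show ?thesis using l6 by (auto simp: nbrs_V nbrs_Y4)
qed

end

definition sw :: "nat \<Rightarrow> nat \<Rightarrow> nat \<Rightarrow> nat" where
  "sw a b x = (if x = a then b else if x = b then a else x)"

lemma sw_sw[simp]: "sw a b (sw a b x) = x" by (auto simp: sw_def)
lemma sw_eq_iff[simp]: "sw a b x = sw a b y \<longleftrightarrow> x = y" by (auto simp: sw_def)
lemma sw_range: "1 \<le> a \<Longrightarrow> a \<le> n \<Longrightarrow> 1 \<le> b \<Longrightarrow> b \<le> n \<Longrightarrow> 1 \<le> x \<Longrightarrow> x \<le> n \<Longrightarrow> 1 \<le> sw a b x \<and> sw a b x \<le> n"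
  by (auto simp: sw_def)
lemma sw_same[simp]: "sw a a x = x" by (auto simp: sw_def)

fun G :: "nat \<Rightarrow> nat \<Rightarrow> nat \<Rightarrow> nat \<Rightarrow> nat \<Rightarrow> nat \<Rightarrow> hvert \<Rightarrow> hvert" where
  "G a b c d e g (X i x) = X i (sw a b x)"
| "G a b c d e g (Y1 x) = Y1 (sw a b x)"
| "G a b c d e g (Y4 x) = Y4 (sw a b x)"
| "G a b c d e g (PU x) = PU (sw c d x)"
| "G a b c d e g (PV x) = PV (sw e g x)"
| "G a b c d e g U = U"
| "G a b c d e g V = V"
| "G a b c d e g Y2 = Y2"
| "G a b c d e g Y3 = Y3"

lemma GG[simp]: "G a b c d e g (G a b c d e g w) = w" by (cases w) auto

lemma sw_range2: "(1 \<le> a \<and> a \<le> n \<and> 1 \<le> b \<and> b \<le> n) \<or> a = b \<Longrightarrow> 1 \<le> x \<Longrightarrow> x \<le> n \<Longrightarrow> 1 \<le> sw a b x \<and> sw a b x \<le> n"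
  by (auto simp: sw_def)

lemma G_aut:
  assumes ab: "1 \<le> a" "a \<le> k" "1 \<le> b" "b \<le> k"
    and cd: "(1 \<le> c \<and> c \<le> T \<and> 1 \<le> d \<and> d \<le> T) \<or> c = d"
    and eg: "(1 \<le> e \<and> e \<le> T \<and> 1 \<le> g \<and> g \<le> T) \<or> e = g"
  shows "graph_aut (H_verts l k T) (H_adj l k T) (G a b c d e g)"
proof -
  let ?G = "G a b c d e g"
  have inV: "?G w \<in> H_verts l k T" if "w \<in> H_verts l k T" for w
    using that sw_range[OF ab] sw_range2[OF cd] sw_range2[OF eg] by (cases w) auto
  have edge: "(?G p, ?G q) \<in> H_edges l k T" if "(p, q) \<in> H_edges l k T" for p q
    using that sw_range[OF ab] sw_range2[OF cd] sw_range2[OF eg]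
    unfolding H_edges_def by (elim UnE; force)
  have adj: "H_adj l k T (?G p) (?G q)" if "H_adj l k T p q" for p q
    using that edge unfolding H_adj_def by blast
  have adj_iff: "H_adj l k T p q \<longleftrightarrow> H_adj l k T (?G p) (?G q)" for p q
    using adj[of p q] adj[of "?G p" "?G q"] by auto
  have "bij_betw ?G (H_verts l k T) (H_verts l k T)"
    by (rule bij_betw_byWitness[where f' = ?G]) (use inV in auto)
  then show ?thesis unfolding graph_aut_def using adj_iff by blast
qed

lemma id_aut: "graph_aut Vs E id" by (simp add: graph_aut_def)


lemma orbit_eq:
  assumes "\<And>f. graph_aut Vs E f \<Longrightarrow> f x0 = x0 \<Longrightarrow> f w \<in> S"
    and "\<And>x. x \<in> S \<Longrightarrow> \<exists>f. graph_aut Vs E f \<and> f x0 = x0 \<and> f w = x"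
  shows "stab_orbit Vs E x0 w = S"
  unfolding stab_orbit_def using assms by blast

theorem proposition18:
  fixes l k T :: nat and t :: real
  assumes "k > 2" and "l > 6" and "t > 0" and "T = nat \<lfloor>t * real k\<rfloor>"
  defines "Orb \<equiv> stab_orbit (H_verts l k T) (H_adj l k T) U"
  shows "(\<forall>r. 1 \<le> r \<and> r \<le> T \<longrightarrow> Orb (PU r) = {PU s | s. 1 \<le> s \<and> s \<le> T})
    \<and> Orb U = {U}
    \<and> (\<forall>i r. 1 \<le> i \<and> i \<le> l \<and> 1 \<le> r \<and> r \<le> k \<longrightarrow>
          Orb (X i r) = {X i s | s. 1 \<le> s \<and> s \<le> k})
    \<and> (\<forall>r. 1 \<le> r \<and> r \<le> k \<longrightarrow> Orb (Y1 r) = {Y1 s | s. 1 \<le> s \<and> s \<le> k})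
    \<and> Orb Y2 = {Y2}
    \<and> Orb Y3 = {Y3}
    \<and> (\<forall>r. 1 \<le> r \<and> r \<le> k \<longrightarrow> Orb (Y4 r) = {Y4 s | s. 1 \<le> s \<and> s \<le> k})
    \<and> Orb V = {V}
    \<and> (\<forall>r. 1 \<le> r \<and> r \<le> T \<longrightarrow> Orb (PV r) = {PV s | s. 1 \<le> s \<and> s \<le> T})"
proof -
  have A: "autU l k T f" if "graph_aut (H_verts l k T) (H_adj l k T) f" "f U = U" for f
    using that assms(1,2) by (unfold_locales) auto
  have k1: "1 \<le> (1::nat)" "(1::nat) \<le> k" using assms(1) by auto
  have GA: "graph_aut (H_verts l k T) (H_adj l k T) (G r s 1 1 1 1)"
    if "1 \<le> r" "r \<le> k" "1 \<le> s" "s \<le> k" for r s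
    by (rule G_aut) (use that in auto)
  have GU: "graph_aut (H_verts l k T) (H_adj l k T) (G 1 1 r s 1 1)"
    if "1 \<le> r" "r \<le> T" "1 \<le> s" "s \<le> T" for r s
    by (rule G_aut) (use that k1 in auto)
  have GV: "graph_aut (H_verts l k T) (H_adj l k T) (G 1 1 1 1 r s)"
    if "1 \<le> r" "r \<le> T" "1 \<le> s" "s \<le> T" for r s
    by (rule G_aut) (use that k1 in auto)
  have ID: "\<exists>f. graph_aut (H_verts l k T) (H_adj l k T) f \<and> f U = U \<and> f w = w" for w
    using id_aut by fastforce
  show ?thesis unfolding Orb_def
  proof (intro conjI allI impI)
    fix r assume r: "1 \<le> r \<and> r \<le> T"
    show "stab_orbit (H_verts l k T) (H_adj l k T) U (PU r) = {PU s | s. 1 \<le> s \<and> s \<le> T}"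
    proof (rule orbit_eq)
      fix f assume "graph_aut (H_verts l k T) (H_adj l k T) f" "f U = U"
      then interpret autU l k T f by (rule A)
      show "f (PU r) \<in> {PU s | s. 1 \<le> s \<and> s \<le> T}" using fPU r by auto
    next
      fix x assume "x \<in> {PU s | s. 1 \<le> s \<and> s \<le> T}"
      then obtain s where s: "1 \<le> s" "s \<le> T" "x = PU s" by auto
      show "\<exists>f. graph_aut (H_verts l k T) (H_adj l k T) f \<and> f U = U \<and> f (PU r) = x"
        by (rule exI[of _ "G 1 1 r s 1 1"]) (use GU[of r s] r s in \<open>auto simp: sw_def\<close>)
    qed
  next
    fix r assume r: "1 \<le> r \<and> r \<le> T"
    show "stab_orbit (H_verts l k T) (H_adj l k T) U (PV r) = {PV s | s. 1 \<le> s \<and> s \<le> T}"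
    proof (rule orbit_eq)
      fix f assume "graph_aut (H_verts l k T) (H_adj l k T) f" "f U = U"
      then interpret autU l k T f by (rule A)
      show "f (PV r) \<in> {PV s | s. 1 \<le> s \<and> s \<le> T}" using fPV r by auto
    next
      fix x assume "x \<in> {PV s | s. 1 \<le> s \<and> s \<le> T}"
      then obtain s where s: "1 \<le> s" "s \<le> T" "x = PV s" by auto
      show "\<exists>f. graph_aut (H_verts l k T) (H_adj l k T) f \<and> f U = U \<and> f (PV r) = x"
        by (rule exI[of _ "G 1 1 1 1 r s"]) (use GV[of r s] r s in \<open>auto simp: sw_def\<close>)
    qed
  next
    fix i r assume r: "1 \<le> i \<and> i \<le> l \<and> 1 \<le> r \<and> r \<le> k"
    show "stab_orbit (H_verts l k T) (H_adj l k T) U (X i r) = {X i s | s. 1 \<le> s \<and> s \<le> k}"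
    proof (rule orbit_eq)
      fix f assume "graph_aut (H_verts l k T) (H_adj l k T) f" "f U = U"
      then interpret autU l k T f by (rule A)
      show "f (X i r) \<in> {X i s | s. 1 \<le> s \<and> s \<le> k}" using fX r by blast
    next
      fix x assume "x \<in> {X i s | s. 1 \<le> s \<and> s \<le> k}"
      then obtain s where s: "1 \<le> s" "s \<le> k" "x = X i s" by auto
      show "\<exists>f. graph_aut (H_verts l k T) (H_adj l k T) f \<and> f U = U \<and> f (X i r) = x"
        by (rule exI[of _ "G r s 1 1 1 1"]) (use GA[of r s] r s in \<open>auto simp: sw_def\<close>)
    qed
  next
    fix r assume r: "1 \<le> r \<and> r \<le> k"
    show "stab_orbit (H_verts l k T) (H_adj l k T) U (Y1 r) = {Y1 s | s. 1 \<le> s \<and> s \<le> k}"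
    proof (rule orbit_eq)
      fix f assume "graph_aut (H_verts l k T) (H_adj l k T) f" "f U = U"
      then interpret autU l k T f by (rule A)
      show "f (Y1 r) \<in> {Y1 s | s. 1 \<le> s \<and> s \<le> k}" using fY1 r by blast
    next
      fix x assume "x \<in> {Y1 s | s. 1 \<le> s \<and> s \<le> k}"
      then obtain s where s: "1 \<le> s" "s \<le> k" "x = Y1 s" by auto
      show "\<exists>f. graph_aut (H_verts l k T) (H_adj l k T) f \<and> f U = U \<and> f (Y1 r) = x"
        by (rule exI[of _ "G r s 1 1 1 1"]) (use GA[of r s] r s in \<open>auto simp: sw_def\<close>)
    qed
  next
    fix r assume r: "1 \<le> r \<and> r \<le> k"
    show "stab_orbit (H_verts l k T) (H_adj l k T) U (Y4 r) = {Y4 s | s. 1 \<le> s \<and> s \<le> k}"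
    proof (rule orbit_eq)
      fix f assume "graph_aut (H_verts l k T) (H_adj l k T) f" "f U = U"
      then interpret autU l k T f by (rule A)
      show "f (Y4 r) \<in> {Y4 s | s. 1 \<le> s \<and> s \<le> k}" using fY4 r by blast
    next
      fix x assume "x \<in> {Y4 s | s. 1 \<le> s \<and> s \<le> k}"
      then obtain s where s: "1 \<le> s" "s \<le> k" "x = Y4 s" by auto
      show "\<exists>f. graph_aut (H_verts l k T) (H_adj l k T) f \<and> f U = U \<and> f (Y4 r) = x"
        by (rule exI[of _ "G r s 1 1 1 1"]) (use GA[of r s] r s in \<open>auto simp: sw_def\<close>)
    qed
  next
    show "stab_orbit (H_verts l k T) (H_adj l k T) U U = {U}"
      by (rule orbit_eq) (use ID in auto)
  next
    show "stab_orbit (H_verts l k T) (H_adj l k T) U Y2 = {Y2}"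
    proof (rule orbit_eq)
      fix f assume "graph_aut (H_verts l k T) (H_adj l k T) f" "f U = U"
      then interpret autU l k T f by (rule A)
      show "f Y2 \<in> {Y2}" using fY2 by simp
    qed (use ID in auto)
  next
    show "stab_orbit (H_verts l k T) (H_adj l k T) U Y3 = {Y3}"
    proof (rule orbit_eq)
      fix f assume "graph_aut (H_verts l k T) (H_adj l k T) f" "f U = U"
      then interpret autU l k T f by (rule A)
      show "f Y3 \<in> {Y3}" using fY3 by simp
    qed (use ID in auto)
  next
    show "stab_orbit (H_verts l k T) (H_adj l k T) U V = {V}"
    proof (rule orbit_eq)
      fix f assume "graph_aut (H_verts l k T) (H_adj l k T) f" "f U = U"
      then interpret autU l k T f by (rule A)
      show "f V \<in> {V}" using fV by simp
    qed (use ID in auto)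
  qed
qed

end
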